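(* Let $X$ be a robust $X$-set parameter and let $G$ and $G'$ be graphs such that $\mathfrak{X}(G)\cong\mathfrak{X}(G')$. If $X(K_1)=0$, or if $G$ and $G'$ both have no isolated vertices, then $|V(G)|=|V(G')|$ and there is a relabeling of the vertices of $G'$ (i.e., a bijection $\psi:V(G)\to V(G')$) such that for every $S\subseteq V(G)$, $S$ is an $X$-set of $G$ if and only if $\psi(S)$ is an $X$-set of $G'$.
   Context: All graphs are finite, simple, undirected, with nonempty vertex set. A super $X$-set parameter $X$ assigns to each graph $G$ a family of subsets of $V(G)$, called the $X$-sets of $G$, such that: every graph isomorphism $V(G)\to V(G')$ maps $X$-sets of $G$ to $X$-sets of $G'$; every graph has at least one $X$-set; and (Superset) if $S$ is an $X$-set of $G$ and $S\subseteq S'\subseteq V(G)$, then $S'$ is an $X$-set of $G$. The number $X(G)$ is the minimum cardinality of an $X$-set of $G$. A robust $X$-set parameter is a super $X$-set parameter that additionally satisfies: ($(n-1)$-set) if $G$ is connected of order $n\ge 2$, every set of $n-1$ vertices of $G$ is an $X$-set; (Component consistency) if $G_1,\dots,G_k$ are the connected components of $G$, then $S\subseteq V(G)$ is an $X$-set of $G$ if and only if $S\cap V(G_i)$ is an $X$-set of $G_i$ for every $i$. The $X$-TAR graph $\mathfrak{X}(G)$ has as vertices the $X$-sets of $G$, with $S_1S_2$ an edge iff $|S_1\ominus S_2|=1$ ($\ominus$ = symmetric difference). $K_1$ is the one-vertex graph. *)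

theory Defs
  imports Main "HOL-Library.Infinite_Typeclass"
begin

type_synonym 'v graph = "'v set \<times> ('v \<times> 'v) set"

definition verts :: "'v graph \<Rightarrow> 'v set" where "verts G = fst G"
definition edges :: "'v graph \<Rightarrow> ('v \<times> 'v) set" where "edges G = snd G"

definition is_graph :: "'v graph \<Rightarrow> bool" where
  "is_graph G \<longleftrightarrow> finite (verts G) \<and> verts G \<noteq> {} \<and>
     edges G \<subseteq> verts G \<times> verts G \<and> sym (edges G) \<and> irrefl (edges G)"

definition graph_iso :: "'a graph \<Rightarrow> 'b graph \<Rightarrow> ('a \<Rightarrow> 'b) \<Rightarrow> bool" where
  "graph_iso G H f \<longleftrightarrow> bij_betw f (verts G) (verts H) \<and>
     (\<forall>u\<in>verts G. \<forall>v\<in>verts G. (u, v) \<in> edges G \<longleftrightarrow> (f u, f v) \<in> edges H)"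

definition isomorphic :: "'a graph \<Rightarrow> 'b graph \<Rightarrow> bool" where
  "isomorphic G H \<longleftrightarrow> (\<exists>f. graph_iso G H f)"

definition connected_graph :: "'v graph \<Rightarrow> bool" where
  "connected_graph G \<longleftrightarrow> (\<forall>u\<in>verts G. \<forall>v\<in>verts G. (u, v) \<in> (edges G)\<^sup>*)"

definition component_of :: "'v graph \<Rightarrow> 'v \<Rightarrow> 'v set" where
  "component_of G v = {u. (v, u) \<in> (edges G)\<^sup>*}"

definition components :: "'v graph \<Rightarrow> 'v set set" where
  "components G = component_of G ` verts G"

definition induced :: "'v graph \<Rightarrow> 'v set \<Rightarrow> 'v graph" where
  "induced G C = (C, edges G \<inter> (C \<times> C))"

definition K1 :: "'v \<Rightarrow> 'v graph" where "K1 v = ({v}, {})"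

definition no_isolated :: "'v graph \<Rightarrow> bool" where
  "no_isolated G \<longleftrightarrow> (\<forall>v\<in>verts G. \<exists>u. (v, u) \<in> edges G)"

text \<open>A set parameter assigns to every graph (on vertex type 'v) a family of
  vertex subsets. We use an infinite vertex type so that every finite graph
  is represented up to isomorphism.\<close>
definition super_param :: "('v::infinite graph \<Rightarrow> 'v set set) \<Rightarrow> bool" where
  "super_param X \<longleftrightarrow>
     (\<forall>G. is_graph G \<longrightarrow> (\<forall>S\<in>X G. S \<subseteq> verts G)) \<and>
     (\<forall>G H f. is_graph G \<longrightarrow> is_graph H \<longrightarrow> graph_iso G H f \<longrightarrow>
        (\<forall>S\<in>X G. f ` S \<in> X H)) \<and>
     (\<forall>G. is_graph G \<longrightarrow> X G \<noteq> {}) \<and>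
     (\<forall>G S S'. is_graph G \<longrightarrow> S \<in> X G \<longrightarrow> S \<subseteq> S' \<longrightarrow> S' \<subseteq> verts G \<longrightarrow> S' \<in> X G)"

definition robust_param :: "('v::infinite graph \<Rightarrow> 'v set set) \<Rightarrow> bool" where
  "robust_param X \<longleftrightarrow> super_param X \<and>
     (\<forall>G. is_graph G \<longrightarrow> connected_graph G \<longrightarrow> card (verts G) \<ge> 2 \<longrightarrow>
        (\<forall>S. S \<subseteq> verts G \<longrightarrow> card S = card (verts G) - 1 \<longrightarrow> S \<in> X G)) \<and>
     (\<forall>G S. is_graph G \<longrightarrow> S \<subseteq> verts G \<longrightarrow>
        (S \<in> X G \<longleftrightarrow> (\<forall>C\<in>components G. S \<inter> C \<in> X (induced G C))))"

definition param_num :: "('v graph \<Rightarrow> 'v set set) \<Rightarrow> 'v graph \<Rightarrow> nat" where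
  "param_num X G = Min (card ` X G)"

definition tar_graph :: "('v graph \<Rightarrow> 'v set set) \<Rightarrow> 'v graph \<Rightarrow> 'v set graph" where
  "tar_graph X G = (X G, {(S1, S2). S1 \<in> X G \<and> S2 \<in> X G \<and>
                                  card ((S1 - S2) \<union> (S2 - S1)) = 1})"

end

theory Submission
  imports Defs
begin


definition sdc :: "'a set \<Rightarrow> 'a set \<Rightarrow> nat" where
  "sdc A B = card ((A - B) \<union> (B - A))"

lemma sdc_tri:
  assumes "finite A" "finite B" "finite C"
  shows "sdc A C \<le> sdc A B + sdc B C"
proof -
  have "card ((A - C) \<union> (C - A)) \<le> card (((A - B) \<union> (B - A)) \<union> ((B - C) \<union> (C - B)))"
    by (rule card_mono) (use assms in auto)
  also have "\<dots> \<le> card ((A - B) \<union> (B - A)) + card ((B - C) \<union> (C - B))"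
    by (rule card_Un_le)
  finally show ?thesis unfolding sdc_def .
qed

lemma sdc_le:
  assumes fV: "finite V" and fV': "finite V'" and FV: "F \<subseteq> Pow V" and FV': "F' \<subseteq> Pow V'"
    and img: "\<phi> ` F \<subseteq> F'"
    and up: "\<And>S T. S \<in> F \<Longrightarrow> S \<subseteq> T \<Longrightarrow> T \<subseteq> V \<Longrightarrow> T \<in> F"
    and adj: "\<And>S T. S \<in> F \<Longrightarrow> T \<in> F \<Longrightarrow> sdc S T = 1 \<Longrightarrow> sdc (\<phi> S) (\<phi> T) = 1"
  shows "S \<in> F \<Longrightarrow> T \<in> F \<Longrightarrow> sdc (\<phi> S) (\<phi> T) \<le> sdc S T"
proof (induction "sdc S T" arbitrary: S)
  case 0
  have "finite S" "finite T" using 0 FV fV by (auto intro: finite_subset)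
  then have "(S - T) \<union> (T - S) = {}" using 0 unfolding sdc_def by simp
  then have "S = T" by blast
  then show ?case by (simp add: sdc_def)
next
  case (Suc n)
  have fS: "finite S" "finite T" using Suc FV fV by (auto intro: finite_subset)
  have TV: "T \<subseteq> V" "S \<subseteq> V" using Suc FV by auto
  have "\<exists>S1. S1 \<in> F \<and> sdc S S1 = 1 \<and> sdc S1 T = n"
  proof (cases "T - S = {}")
    case False
    then obtain x where x: "x \<in> T" "x \<notin> S" by blast
    let ?S1 = "insert x S"
    have "?S1 \<in> F" using up[OF Suc(3)] x TV by auto
    moreover have "(S - ?S1) \<union> (?S1 - S) = {x}" using x by auto
    moreover have "(?S1 - T) \<union> (T - ?S1) = ((S - T) \<union> (T - S)) - {x}" using x by auto
    moreover have "x \<in> (S - T) \<union> (T - S)" using x by auto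
    ultimately show ?thesis using Suc(2) fS unfolding sdc_def
      by (intro exI[of _ ?S1]) (auto simp: card_Diff_singleton)
  next
    case True
    then have "(S - T) \<union> (T - S) = S - T" by auto
    with Suc(2) obtain x where x: "x \<in> S" "x \<notin> T" unfolding sdc_def
      by (metis Diff_iff card.empty ex_in_conv nat.distinct(1))
    let ?S1 = "S - {x}"
    have "T \<subseteq> ?S1" using x True by blast
    then have "?S1 \<in> F" using up[OF Suc(4)] TV by blast
    moreover have "(S - ?S1) \<union> (?S1 - S) = {x}" using x by auto
    moreover have "(?S1 - T) \<union> (T - ?S1) = ((S - T) \<union> (T - S)) - {x}" using x True by auto
    moreover have "x \<in> (S - T) \<union> (T - S)" using x by auto
    ultimately show ?thesis using Suc(2) fS unfolding sdc_def
      by (intro exI[of _ ?S1]) (auto simp: card_Diff_singleton)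
  qed
  then obtain S1 where S1: "S1 \<in> F" "sdc S S1 = 1" "sdc S1 T = n" by blast
  have IH: "sdc (\<phi> S1) (\<phi> T) \<le> n" using Suc(1)[OF S1(3)[symmetric] S1(1) Suc(4)] S1(3) by simp
  have a: "sdc (\<phi> S) (\<phi> S1) = 1" using adj[OF Suc(3) S1(1) S1(2)] .
  have fin: "finite (\<phi> S)" "finite (\<phi> S1)" "finite (\<phi> T)"
    using img Suc(3,4) S1(1) FV' fV' by (auto intro: finite_subset)
  have "sdc (\<phi> S) (\<phi> T) \<le> sdc (\<phi> S) (\<phi> S1) + sdc (\<phi> S1) (\<phi> T)"
    by (rule sdc_tri) (use fin in auto)
  then show ?case using IH a Suc(2) by simp
qed

lemma symd_ins:
  assumes "(Q - W) \<union> (W - Q) = {y}" "y \<notin> (P - W) \<union> (W - P)"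
  shows "(P - Q) \<union> (Q - P) = insert y ((P - W) \<union> (W - P))"
proof -
  have "\<And>z. z \<in> Q \<longleftrightarrow> (z \<in> W \<longleftrightarrow> z \<noteq> y)" using assms(1) by (auto simp: set_eq_iff) 
  then show ?thesis using assms(2) by auto
qed

lemma symd_cancel:
  assumes "(Q - W) \<union> (W - Q) = (P - W) \<union> (W - P)"
  shows "P = Q"
  using assms by blast

lemma comb:
  assumes fV: "finite V" and fV': "finite V'" and FV: "F \<subseteq> Pow V" and FV': "F' \<subseteq> Pow V'"
    and up: "\<And>S T. S \<in> F \<Longrightarrow> S \<subseteq> T \<Longrightarrow> T \<subseteq> V \<Longrightarrow> T \<in> F"
    and up': "\<And>S T. S \<in> F' \<Longrightarrow> S \<subseteq> T \<Longrightarrow> T \<subseteq> V' \<Longrightarrow> T \<in> F'"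
    and top: "V \<in> F" and coat: "\<And>v. v \<in> V \<Longrightarrow> V - {v} \<in> F"
    and bij: "bij_betw \<phi> F F'"
    and adj: "\<And>S T. S \<in> F \<Longrightarrow> T \<in> F \<Longrightarrow> sdc S T = 1 \<longleftrightarrow> sdc (\<phi> S) (\<phi> T) = 1"
  shows "\<exists>\<psi>. inj_on \<psi> V \<and> \<psi> ` V \<subseteq> V' \<and>
     (\<forall>S\<in>F. \<forall>v\<in>V. (\<psi> v \<in> \<phi> S) = ((\<psi> v \<in> \<phi> V) = (v \<in> S)))"
proof -
  have img: "\<phi> ` F = F'" using bij by (simp add: bij_betw_def)
  have injphi: "inj_on \<phi> F" using bij by (simp add: bij_betw_def)
  have le1: "\<And>S T. S \<in> F \<Longrightarrow> T \<in> F \<Longrightarrow> sdc (\<phi> S) (\<phi> T) \<le> sdc S T"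
    by (rule sdc_le[OF fV fV' FV FV' _ up]) (use img adj in auto)
  let ?i = "inv_into F \<phi>"
  have iimg: "?i ` F' \<subseteq> F" using bij_betw_inv_into[OF bij] by (simp add: bij_betw_def)
  have le2: "\<And>S T. S \<in> F' \<Longrightarrow> T \<in> F' \<Longrightarrow> sdc (?i S) (?i T) \<le> sdc S T"
  proof (rule sdc_le[OF fV' fV FV' FV iimg up'])
    fix S T assume "S \<in> F'" "T \<in> F'" "sdc S T = 1"
    then show "sdc (?i S) (?i T) = 1" using adj[of "?i S" "?i T"] iimg img
      by (auto simp: f_inv_into_f)
  qed
  have eq: "\<And>S T. S \<in> F \<Longrightarrow> T \<in> F \<Longrightarrow> sdc (\<phi> S) (\<phi> T) = sdc S T"
  proof -
    fix S T assume a: "S \<in> F" "T \<in> F"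
    have "sdc (?i (\<phi> S)) (?i (\<phi> T)) \<le> sdc (\<phi> S) (\<phi> T)" using le2 a img by auto
    then show "sdc (\<phi> S) (\<phi> T) = sdc S T" using le1[OF a] a injphi
      by (simp add: inv_into_f_f)
  qed
  define W where "W = \<phi> V"
  have phiV': "\<And>S. S \<in> F \<Longrightarrow> \<phi> S \<subseteq> V'" using img FV' by auto
  have finphi: "\<And>S. S \<in> F \<Longrightarrow> finite (\<phi> S)" using phiV' fV' finite_subset by blast
  have sdcV: "\<And>S. S \<in> F \<Longrightarrow> sdc S V = card (V - S)"
  proof -
    fix S assume "S \<in> F"
    then have "S \<subseteq> V" using FV by auto
    then have "(S - V) \<union> (V - S) = V - S" by blast
    then show "sdc S V = card (V - S)" unfolding sdc_def by simp
  qed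
  have single: "\<And>v. v \<in> V \<Longrightarrow> \<exists>y. (\<phi> (V - {v}) - W) \<union> (W - \<phi> (V - {v})) = {y}"
  proof -
    fix v assume v: "v \<in> V"
    have "sdc (\<phi> (V - {v})) W = sdc (V - {v}) V" unfolding W_def by (rule eq[OF coat[OF v] top])
    also have "\<dots> = 1"
    proof -
      have "V - (V - {v}) = {v}" using v by blast
      then show ?thesis using sdcV[OF coat[OF v]] by simp
    qed
    finally show "\<exists>y. (\<phi> (V - {v}) - W) \<union> (W - \<phi> (V - {v})) = {y}"
      unfolding sdc_def by (simp add: card_1_singleton_iff)
  qed
  define \<psi> where "\<psi> v = (THE y. (\<phi> (V - {v}) - W) \<union> (W - \<phi> (V - {v})) = {y})" for v
  have psi: "\<And>v. v \<in> V \<Longrightarrow> (\<phi> (V - {v}) - W) \<union> (W - \<phi> (V - {v})) = {\<psi> v}"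
  proof -
    fix v assume v: "v \<in> V"
    obtain y where y: "(\<phi> (V - {v}) - W) \<union> (W - \<phi> (V - {v})) = {y}" using single[OF v] by blast
    have "\<psi> v = y" unfolding \<psi>_def by (rule the_equality) (use y in auto)
    then show "(\<phi> (V - {v}) - W) \<union> (W - \<phi> (V - {v})) = {\<psi> v}" using y by simp
  qed
  have psiV': "\<psi> ` V \<subseteq> V'"
  proof
    fix x assume "x \<in> \<psi> ` V"
    then obtain v where v: "v \<in> V" "x = \<psi> v" by blast
    have "x \<in> (\<phi> (V - {v}) - W) \<union> (W - \<phi> (V - {v}))" using psi[OF v(1)] v by simp
    then show "x \<in> V'" using phiV'[OF coat[OF v(1)]] phiV'[OF top] unfolding W_def by blast
  qed
  have injpsi: "inj_on \<psi> V"
  proof (rule inj_onI)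
    fix u v assume uv: "u \<in> V" "v \<in> V" "\<psi> u = \<psi> v"
    have "\<phi> (V - {u}) = \<phi> (V - {v})"
      by (rule symd_cancel[of _ W]) (use psi[OF uv(1)] psi[OF uv(2)] uv(3) in simp)
    then have "V - {u} = V - {v}" using injphi coat uv by (meson inj_onD)
    then show "u = v" using uv by blast
  qed
  have key: "\<And>S v. S \<in> F \<Longrightarrow> v \<in> V \<Longrightarrow> v \<notin> S \<Longrightarrow> \<psi> v \<in> (\<phi> S - W) \<union> (W - \<phi> S)"
  proof (rule ccontr)
    fix S v assume a: "S \<in> F" "v \<in> V" "v \<notin> S" and n: "\<psi> v \<notin> (\<phi> S - W) \<union> (W - \<phi> S)"
    have SV: "S \<subseteq> V" using a FV by auto
    have d1: "card ((\<phi> S - W) \<union> (W - \<phi> S)) = card (V - S)"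
      using eq[OF a(1) top] sdcV[OF a(1)] unfolding W_def sdc_def by simp
    have "sdc (\<phi> S) (\<phi> (V - {v})) = sdc S (V - {v})" by (rule eq[OF a(1) coat[OF a(2)]])
    moreover have "(S - (V - {v})) \<union> ((V - {v}) - S) = (V - S) - {v}" using SV a by auto
    then have "sdc S (V - {v}) = card (V - S) - 1" unfolding sdc_def using a fV by (simp add: card_Diff_singleton)
    ultimately have d2: "sdc (\<phi> S) (\<phi> (V - {v})) = card (V - S) - 1" by simp
    have "(\<phi> S - \<phi> (V - {v})) \<union> (\<phi> (V - {v}) - \<phi> S) = insert (\<psi> v) ((\<phi> S - W) \<union> (W - \<phi> S))"
      by (rule symd_ins[OF psi[OF a(2)] n])
    then have "sdc (\<phi> S) (\<phi> (V - {v})) = card (V - S) + 1"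
      unfolding sdc_def using n d1 finphi[OF a(1)] finphi[OF top] unfolding W_def by simp
    with d2 show False by simp
  qed
  have seteq: "\<And>S. S \<in> F \<Longrightarrow> \<psi> ` (V - S) = (\<phi> S - W) \<union> (W - \<phi> S)"
  proof -
    fix S assume a: "S \<in> F"
    have sub: "\<psi> ` (V - S) \<subseteq> (\<phi> S - W) \<union> (W - \<phi> S)"
    proof
      fix x assume "x \<in> \<psi> ` (V - S)"
      then obtain v where v: "v \<in> V" "v \<notin> S" "x = \<psi> v" by blast
      show "x \<in> (\<phi> S - W) \<union> (W - \<phi> S)" using key[OF a v(1) v(2)] v(3) by simp
    qed
    have c1: "card (\<psi> ` (V - S)) = card (V - S)"
      using injpsi by (meson Diff_subset card_image inj_on_subset)
    have d1: "card ((\<phi> S - W) \<union> (W - \<phi> S)) = card (V - S)"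
      using eq[OF a top] sdcV[OF a] unfolding W_def sdc_def by simp
    show "\<psi> ` (V - S) = (\<phi> S - W) \<union> (W - \<phi> S)"
    proof (rule card_subset_eq[OF _ sub])
      show "finite ((\<phi> S - W) \<union> (W - \<phi> S))" using finphi[OF a] finphi[OF top] unfolding W_def by simp
      show "card (\<psi> ` (V - S)) = card ((\<phi> S - W) \<union> (W - \<phi> S))" using c1 d1 by simp
    qed
  qed
  have char: "\<forall>S\<in>F. \<forall>v\<in>V. (\<psi> v \<in> \<phi> S) = ((\<psi> v \<in> W) = (v \<in> S))"
  proof (intro ballI)
    fix S v assume a: "S \<in> F" "v \<in> V"
    have "(\<psi> v \<in> (\<phi> S - W) \<union> (W - \<phi> S)) = (v \<notin> S)"
    proof -
      have "(\<psi> v \<in> \<psi> ` (V - S)) = (v \<in> V - S)"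
        by (rule inj_on_image_mem_iff[OF injpsi a(2)]) blast
      then show ?thesis using seteq[OF a(1)] a(2) by simp
    qed
    then show "(\<psi> v \<in> \<phi> S) = ((\<psi> v \<in> W) = (v \<in> S))" by blast
  qed
  show ?thesis using injpsi psiV' char unfolding W_def by blast
qed


lemma final:
  assumes bpsi: "bij_betw \<psi> V V'" and FV: "F \<subseteq> Pow V" and FV': "F' \<subseteq> Pow V'"
    and up: "\<And>S T. S \<in> F \<Longrightarrow> S \<subseteq> T \<Longrightarrow> T \<subseteq> V \<Longrightarrow> T \<in> F"
    and up': "\<And>S T. S \<in> F' \<Longrightarrow> S \<subseteq> T \<Longrightarrow> T \<subseteq> V' \<Longrightarrow> T \<in> F'"
    and bij: "bij_betw \<phi> F F'"
    and char: "\<forall>S\<in>F. \<forall>v\<in>V. (\<psi> v \<in> \<phi> S) = ((\<psi> v \<in> W) = (v \<in> S))"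
    and SV: "S \<subseteq> V"
  shows "S \<in> F \<longleftrightarrow> \<psi> ` S \<in> F'"
proof
  have inj: "inj_on \<psi> V" and im: "\<psi> ` V = V'" using bpsi by (auto simp: bij_betw_def)
  have img: "\<phi> ` F = F'" using bij by (simp add: bij_betw_def)
  {
    assume S: "S \<in> F"
    define S3 where "S3 = S \<union> {v\<in>V. \<psi> v \<notin> W}"
    have S3: "S3 \<in> F" using up[OF S, of S3] SV unfolding S3_def by blast
    have "\<phi> S3 \<subseteq> \<psi> ` S"
    proof
      fix x assume x: "x \<in> \<phi> S3"
      then have "x \<in> V'" using img FV' S3 by blast
      then obtain v where v: "v \<in> V" "x = \<psi> v" using im by blast
      have "(\<psi> v \<in> W) = (v \<in> S3)" using char S3 v x by blast
      then have "v \<in> S" unfolding S3_def using v by blast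
      then show "x \<in> \<psi> ` S" using v by blast
    qed
    moreover have "\<phi> S3 \<in> F'" using img S3 by blast
    moreover have "\<psi> ` S \<subseteq> V'" using im SV by blast
    ultimately show "\<psi> ` S \<in> F'" using up' by blast
  }
  {
    assume S: "\<psi> ` S \<in> F'"
    define T where "T = \<psi> ` S \<union> (V' - W)"
    have T: "T \<in> F'" using up'[OF S, of T] im SV unfolding T_def by blast
    then obtain S4 where S4: "S4 \<in> F" "\<phi> S4 = T" using img by blast
    have "S4 \<subseteq> S"
    proof
      fix v assume v: "v \<in> S4"
      have vV: "v \<in> V" using v S4 FV by blast
      have c: "(\<psi> v \<in> T) = (\<psi> v \<in> W)" using char S4 v vV by blast
      show "v \<in> S"
      proof (rule ccontr)
        assume "v \<notin> S"
        then have "\<psi> v \<notin> \<psi> ` S" using inj SV vV by (auto simp: inj_on_image_mem_iff)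
        then have "(\<psi> v \<in> T) = (\<psi> v \<notin> W)" using vV im unfolding T_def by blast
        with c show False by blast
      qed
    qed
    then show "S \<in> F" using up[OF S4(1)] SV by blast
  }
qed



lemma sp_parts:
  assumes "super_param X"
  shows "\<And>G S. is_graph G \<Longrightarrow> S \<in> X G \<Longrightarrow> S \<subseteq> verts G"
    "\<And>G H f S. is_graph G \<Longrightarrow> is_graph H \<Longrightarrow> graph_iso G H f \<Longrightarrow> S \<in> X G \<Longrightarrow> f ` S \<in> X H"
    "\<And>G. is_graph G \<Longrightarrow> X G \<noteq> {}"
    "\<And>G S S'. is_graph G \<Longrightarrow> S \<in> X G \<Longrightarrow> S \<subseteq> S' \<Longrightarrow> S' \<subseteq> verts G \<Longrightarrow> S' \<in> X G"
  using assms unfolding super_param_def by metis+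

lemma rp_parts:
  assumes "robust_param X"
  shows "\<And>G S. is_graph G \<Longrightarrow> S \<subseteq> verts G \<Longrightarrow> (S \<in> X G \<longleftrightarrow> (\<forall>C\<in>components G. S \<inter> C \<in> X (induced G C)))"
    "\<And>H S. is_graph H \<Longrightarrow> connected_graph H \<Longrightarrow> card (verts H) \<ge> 2 \<Longrightarrow>
        S \<subseteq> verts H \<Longrightarrow> card S = card (verts H) - 1 \<Longrightarrow> S \<in> X H"
  using assms unfolding robust_param_def by blast+

lemma full_in:
  assumes "robust_param X" "is_graph G"
  shows "verts G \<in> X G"
proof -
  have sp: "super_param X" using assms(1) by (simp add: robust_param_def)
  obtain S where S: "S \<in> X G" using sp_parts(3)[OF sp assms(2)] by blast
  have "S \<subseteq> verts G" by (rule sp_parts(1)[OF sp assms(2) S])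
  then show ?thesis using sp_parts(4)[OF sp assms(2) S] by blast
qed

lemma comp_sub:
  assumes "is_graph G" "x \<in> verts G"
  shows "component_of G x \<subseteq> verts G"
proof
  fix u assume "u \<in> component_of G x"
  then have "(x, u) \<in> (edges G)\<^sup>*" by (simp add: component_of_def)
  then show "u \<in> verts G"
    by (induction rule: rtrancl_induct) (use assms in \<open>auto simp: is_graph_def\<close>)
qed

lemma comp_path:
  assumes "u \<in> component_of G x"
  shows "(x, u) \<in> (edges G \<inter> (component_of G x \<times> component_of G x))\<^sup>*"
proof -
  have "(x, u) \<in> (edges G)\<^sup>*" using assms by (simp add: component_of_def)
  then show ?thesis
  proof (induction rule: rtrancl_induct)
    case base then show ?case by simp
  next
    case (step y z)
    have "y \<in> component_of G x" "z \<in> component_of G x"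
      using step(1,2) by (auto simp: component_of_def)
    then have "(y, z) \<in> edges G \<inter> (component_of G x \<times> component_of G x)" using step(2) by simp
    with step(3) show ?case by (rule rtrancl_into_rtrancl)
  qed
qed

lemma comp_graph:
  assumes G: "is_graph G" and x: "x \<in> verts G"
  defines "C \<equiv> component_of G x"
  shows "is_graph (induced G C)" "connected_graph (induced G C)"
    "verts (induced G C) = C" "x \<in> C"
proof -
  have CV: "C \<subseteq> verts G" using comp_sub[OF G x] C_def by simp
  show xC: "x \<in> C" by (simp add: C_def component_of_def)
  show vi: "verts (induced G C) = C" by (simp add: induced_def verts_def)
  have ei: "edges (induced G C) = edges G \<inter> (C \<times> C)" by (simp add: induced_def edges_def)
  have sy: "sym (edges G)" "irrefl (edges G)" using G by (auto simp: is_graph_def)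
  have sy2: "sym (edges G \<inter> (C \<times> C))" using sy(1) unfolding sym_def by blast
  show "is_graph (induced G C)" unfolding is_graph_def vi ei
    using CV xC G sy sy2 by (auto simp: is_graph_def irrefl_def intro: finite_subset)
  show "connected_graph (induced G C)" unfolding connected_graph_def vi ei
  proof (intro ballI)
    fix u w assume uw: "u \<in> C" "w \<in> C"
    have p1: "(x, u) \<in> (edges G \<inter> (C \<times> C))\<^sup>*" "(x, w) \<in> (edges G \<inter> (C \<times> C))\<^sup>*"
      using comp_path[of u G x] comp_path[of w G x] uw unfolding C_def by auto
    have "(u, x) \<in> (edges G \<inter> (C \<times> C))\<^sup>*" using p1(1) sym_rtrancl[OF sy2] by (auto simp: sym_def)
    then show "(u, w) \<in> (edges G \<inter> (C \<times> C))\<^sup>*" using p1(2) by simp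
  qed
qed

lemma coat_in:
  assumes R: "robust_param X" and G: "is_graph G" and v: "v \<in> verts G"
    and h: "(\<forall>w. {} \<in> X (K1 w)) \<or> no_isolated G"
  shows "verts G - {v} \<in> X G"
proof -
  have cc: "\<And>S. S \<subseteq> verts G \<Longrightarrow> (S \<in> X G \<longleftrightarrow> (\<forall>C\<in>components G. S \<inter> C \<in> X (induced G C)))"
    using rp_parts(1)[OF R G] by blast
  have nm1: "\<And>H S. is_graph H \<Longrightarrow> connected_graph H \<Longrightarrow> card (verts H) \<ge> 2 \<Longrightarrow>
        S \<subseteq> verts H \<Longrightarrow> card S = card (verts H) - 1 \<Longrightarrow> S \<in> X H"
    using rp_parts(2)[OF R] by blast
  show ?thesis
  proof (subst cc, blast, intro ballI)
    fix C assume "C \<in> components G"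
    then obtain x where x: "x \<in> verts G" "C = component_of G x" by (auto simp: components_def)
    note cg = comp_graph[OF G x(1), folded x(2)]
    have CV: "C \<subseteq> verts G" using comp_sub[OF G x(1)] x(2) by simp
    have finC: "finite C" using CV G finite_subset by (auto simp: is_graph_def)
    show "(verts G - {v}) \<inter> C \<in> X (induced G C)"
    proof (cases "v \<in> C")
      case False
      then have "(verts G - {v}) \<inter> C = verts (induced G C)" using CV cg(3) by auto
      then show ?thesis using full_in[OF R cg(1)] by simp
    next
      case True
      show ?thesis
      proof (cases "C = {v}")
        case True
        have "induced G C = K1 v"
          using G True by (auto simp: induced_def K1_def is_graph_def irrefl_def)
        moreover have "(verts G - {v}) \<inter> C = {}" using True by auto
        moreover have "{} \<in> X (K1 v)"
        proof -
          { assume ni: "no_isolated G"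
            then obtain u where u: "(v, u) \<in> edges G" using v by (auto simp: no_isolated_def)
            have "(x, v) \<in> (edges G)\<^sup>*" using \<open>v \<in> C\<close> x(2) by (simp add: component_of_def)
            then have "u \<in> C" using u x(2) by (auto simp: component_of_def)
            moreover have "u \<noteq> v" using u G by (auto simp: is_graph_def irrefl_def)
            ultimately have False using True by blast }
          then show ?thesis using h by blast
        qed
        ultimately show ?thesis by simp
      next
        case False
        then obtain u where "u \<in> C" "u \<noteq> v" using \<open>v \<in> C\<close> by blast
        then have "card {u, v} \<le> card C" using \<open>v \<in> C\<close> finC by (intro card_mono) auto
        then have "card C \<ge> 2" using \<open>u \<noteq> v\<close> by simp
        moreover have "card ((verts G - {v}) \<inter> C) = card C - 1"
        proof -
          have "(verts G - {v}) \<inter> C = C - {v}" using CV by auto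
          then show ?thesis using \<open>v \<in> C\<close> finC by simp
        qed
        ultimately show ?thesis using nm1[OF cg(1) cg(2)] cg(3) by auto
      qed
    qed
  qed
qed

lemma K1_empty:
  assumes R: "robust_param X" and p: "param_num X (K1 v) = 0"
  shows "{} \<in> X (K1 w)"
proof -
  have sp: "super_param X" using R by (simp add: robust_param_def)
  have g: "\<And>a. is_graph (K1 a)" by (simp add: is_graph_def K1_def verts_def edges_def)
  have vk: "verts (K1 v) = {v}" by (simp add: K1_def verts_def)
  have sub: "\<forall>S\<in>X (K1 v). S \<subseteq> {v}" using sp_parts(1)[OF sp g[of v]] vk by blast
  have ne: "X (K1 v) \<noteq> {}" using sp_parts(3)[OF sp g] by blast
  have fin: "finite (X (K1 v))" 
  proof (rule finite_subset)
    show "X (K1 v) \<subseteq> Pow {v}" using sub by blast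
  qed simp
  have "Min (card ` X (K1 v)) \<in> card ` X (K1 v)" using fin ne by (intro Min_in) auto
  with p obtain S where S: "S \<in> X (K1 v)" "card S = 0" by (auto simp: param_num_def)
  have "S = {}" 
  proof -
    have "finite S" using S(1) sub finite_subset by blast
    then show ?thesis using S(2) by simp
  qed
  have iso: "graph_iso (K1 v) (K1 w) (\<lambda>_. w)"
    by (simp add: graph_iso_def K1_def verts_def edges_def bij_betw_def)
  have "(\<lambda>_. w) ` S \<in> X (K1 w)" by (rule sp_parts(2)[OF sp g g iso S(1)])
  then show ?thesis using \<open>S = {}\<close> by simp
qed



theorem theorem2p12:
  fixes X :: "'v::infinite graph \<Rightarrow> 'v set set" and G G' :: "'v graph"
  assumes "robust_param X"
    and "is_graph G" and "is_graph G'"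
    and "isomorphic (tar_graph X G) (tar_graph X G')"
    and "(\<exists>v. param_num X (K1 v) = 0) \<or> (no_isolated G \<and> no_isolated G')"
  shows "card (verts G) = card (verts G') \<and>
         (\<exists>\<psi>. bij_betw \<psi> (verts G) (verts G') \<and>
              (\<forall>S. S \<subseteq> verts G \<longrightarrow> (S \<in> X G \<longleftrightarrow> \<psi> ` S \<in> X G')))"
proof -
  note R = assms(1) and G = assms(2) and G' = assms(3)
  have sp: "super_param X" using R by (simp add: robust_param_def)
  obtain f where iso: "graph_iso (tar_graph X G) (tar_graph X G') f"
    using assms(4) by (auto simp: isomorphic_def)
  have tv: "\<And>H. verts (tar_graph X H) = X H" by (simp add: tar_graph_def verts_def)
  have te: "\<And>H S T. (S, T) \<in> edges (tar_graph X H) \<longleftrightarrow> S \<in> X H \<and> T \<in> X H \<and> sdc S T = 1"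
    by (simp add: tar_graph_def edges_def sdc_def)
  have bij: "bij_betw f (X G) (X G')" using iso tv by (simp add: graph_iso_def)
  have adj0: "\<And>S T. S \<in> X G \<Longrightarrow> T \<in> X G \<Longrightarrow>
      (S, T) \<in> edges (tar_graph X G) \<longleftrightarrow> (f S, f T) \<in> edges (tar_graph X G')"
    using iso tv unfolding graph_iso_def by blast
  have fim: "\<And>S. S \<in> X G \<Longrightarrow> f S \<in> X G'" using bij by (meson bij_betw_apply)
  have adj: "\<And>S T. S \<in> X G \<Longrightarrow> T \<in> X G \<Longrightarrow> sdc S T = 1 \<longleftrightarrow> sdc (f S) (f T) = 1"
  proof -
    fix S T assume a: "S \<in> X G" "T \<in> X G"
    show "sdc S T = 1 \<longleftrightarrow> sdc (f S) (f T) = 1" using adj0[OF a] te[of S T G] te[of "f S" "f T" G'] fim[OF a(1)] fim[OF a(2)] a by simp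
  qed
  let ?i = "inv_into (X G) f"
  have bij2: "bij_betw ?i (X G') (X G)" by (rule bij_betw_inv_into[OF bij])
  have adj2: "\<And>S T. S \<in> X G' \<Longrightarrow> T \<in> X G' \<Longrightarrow> sdc S T = 1 \<longleftrightarrow> sdc (?i S) (?i T) = 1"
  proof -
    fix S T assume a: "S \<in> X G'" "T \<in> X G'"
    have "?i S \<in> X G" "?i T \<in> X G" using bij_betw_apply[OF bij2 a(1)] bij_betw_apply[OF bij2 a(2)] by auto
    moreover have "f (?i S) = S" "f (?i T) = T" using a bij by (auto simp: bij_betw_def f_inv_into_f)
    ultimately show "sdc S T = 1 \<longleftrightarrow> sdc (?i S) (?i T) = 1" using adj by metis
  qed
  have h: "\<And>H. H = G \<or> H = G' \<Longrightarrow> (\<forall>w. {} \<in> X (K1 w)) \<or> no_isolated H"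
    using assms(5) K1_empty[OF R] by blast
  have FV: "\<And>H. is_graph H \<Longrightarrow> X H \<subseteq> Pow (verts H)" using sp_parts(1)[OF sp] by blast
  have up: "\<And>H S T. is_graph H \<Longrightarrow> S \<in> X H \<Longrightarrow> S \<subseteq> T \<Longrightarrow> T \<subseteq> verts H \<Longrightarrow> T \<in> X H"
    using sp_parts(4)[OF sp] by blast
  have fin: "\<And>H. is_graph H \<Longrightarrow> finite (verts H)" by (simp add: is_graph_def)
  have coat: "\<And>v. v \<in> verts G \<Longrightarrow> verts G - {v} \<in> X G"
    using coat_in[OF R G _ h[of G]] by blast
  have coat': "\<And>v. v \<in> verts G' \<Longrightarrow> verts G' - {v} \<in> X G'"
    using coat_in[OF R G' _ h[of G']] by blast
  have "\<exists>\<psi>. inj_on \<psi> (verts G) \<and> \<psi> ` verts G \<subseteq> verts G' \<and>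
    (\<forall>S\<in>X G. \<forall>v\<in>verts G. (\<psi> v \<in> f S) = ((\<psi> v \<in> f (verts G)) = (v \<in> S)))"
    apply (rule comb[where V="verts G" and V'="verts G'" and F="X G" and F'="X G'" and \<phi>=f])
    apply (rule fin[OF G])
    apply (rule fin[OF G'])
    apply (rule FV[OF G])
    apply (rule FV[OF G'])
    apply (rule up[OF G]; assumption)
    apply (rule up[OF G']; assumption)
    apply (rule full_in[OF R G])
    apply (rule coat; assumption)
    apply (rule bij)
    apply (rule adj; assumption)
    done
  then obtain \<psi> where psi: "inj_on \<psi> (verts G)" "\<psi> ` verts G \<subseteq> verts G'"
    "\<forall>S\<in>X G. \<forall>v\<in>verts G. (\<psi> v \<in> f S) = ((\<psi> v \<in> f (verts G)) = (v \<in> S))"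
    by blast
  have "\<exists>\<psi>. inj_on \<psi> (verts G') \<and> \<psi> ` verts G' \<subseteq> verts G \<and>
    (\<forall>S\<in>X G'. \<forall>v\<in>verts G'. (\<psi> v \<in> ?i S) = ((\<psi> v \<in> ?i (verts G')) = (v \<in> S)))"
    apply (rule comb[where V="verts G'" and V'="verts G" and F="X G'" and F'="X G" and \<phi>="?i"])
    apply (rule fin[OF G'])
    apply (rule fin[OF G])
    apply (rule FV[OF G'])
    apply (rule FV[OF G])
    apply (rule up[OF G']; assumption)
    apply (rule up[OF G]; assumption)
    apply (rule full_in[OF R G'])
    apply (rule coat'; assumption)
    apply (rule bij2)
    apply (rule adj2; assumption)
    done
  then obtain \<psi>2 where psi2: "inj_on \<psi>2 (verts G')" "\<psi>2 ` verts G' \<subseteq> verts G"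
    by blast
  have c1: "card (verts G) \<le> card (verts G')" using card_inj_on_le[OF psi(1,2) fin[OF G']] .
  have c2: "card (verts G') \<le> card (verts G)" using card_inj_on_le[OF psi2(1,2) fin[OF G]] .
  have ceq: "card (verts G) = card (verts G')" using c1 c2 by simp
  have "\<psi> ` verts G = verts G'"
    by (rule card_subset_eq[OF fin[OF G'] psi(2)]) (simp add: card_image[OF psi(1)] ceq)
  then have bpsi: "bij_betw \<psi> (verts G) (verts G')" using psi(1) by (simp add: bij_betw_def)
  have "\<forall>S. S \<subseteq> verts G \<longrightarrow> (S \<in> X G \<longleftrightarrow> \<psi> ` S \<in> X G')"
  proof (intro allI impI)
    fix S assume SV: "S \<subseteq> verts G"
    show "S \<in> X G \<longleftrightarrow> \<psi> ` S \<in> X G'"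
      apply (rule final[where F="X G" and F'="X G'" and \<phi>=f and V="verts G" and V'="verts G'" and \<psi>=\<psi>])
      apply (rule bpsi)
      apply (rule FV[OF G])
      apply (rule FV[OF G'])
      apply (rule up[OF G]; assumption)
      apply (rule up[OF G']; assumption)
      apply (rule bij)
      apply (rule psi(3))
      apply (rule SV)
      done
  qed
  then show ?thesis using ceq bpsi by blast
qed


end
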